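(* Let $\mathcal{M}=\langle W^{\mathcal{M}},\sim^{\mathcal{M}},L^{\mathcal{M}}\rangle$ be a partial epistemic model and $\mathbf{A}=\langle T,\sim^{\mathbf{A}},\mathsf{pre}\rangle$ an action model, both having proper partial epistemic frames. Then the partial product update $\mathcal{M}[\![\mathbf{A}]\!]$ is a partial epistemic model (in particular its relations $\sim_a$ are well defined, independent of the representative $X$ chosen in a world $(\langle X\rangle_t,t)$). In particular, if both $\mathcal{M}$ and $\mathbf{A}$ are proper, so is $\mathcal{M}[\![\mathbf{A}]\!]$.
   Context: Fix agents $\mathsf{Ag}=\{0,\dots,n-1\}$, $n>1$, and a set of atomic propositions $\mathsf{At}=\bigcup_{a\in\mathsf{Ag}}\mathsf{At}_a$ (disjoint union). Epistemic formulas are generated by $\varphi::=p\mid\neg\varphi\mid\varphi\wedge\varphi\mid\varphi\vee\varphi\mid K_a\varphi$ ($p\in\mathsf{At}$, $a\in\mathsf{Ag}$). A partial epistemic frame $\langle W,\sim\rangle$ consists of a nonempty finite set $W$ and, for each $a\in\mathsf{Ag}$, a partial equivalence relation $\sim_a$ on $W$ (symmetric and transitive, not necessarily reflexive). A partial epistemic model $\langle W,\sim,L\rangle$ adds a labeling $L:W\to\mathcal{P}(\mathsf{At})$. For a world $w$, $\mathrm{Alive}(w)=\{a\in\mathsf{Ag}\mid w\sim_a w\}$; for $A\subseteq\mathsf{Ag}$, $w\sim_A w'$ means $w\sim_a w'$ for all $a\in A$. A frame/model is proper if for all $w\neq w'$ there is $a$ with $w\not\sim_a w'$. Satisfaction: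 $\mathcal{M},w\models p$ iff $p\in L(w)$; Boolean connectives as usual; $\mathcal{M},w\models K_a\varphi$ iff $\mathcal{M},w'\models\varphi$ for all $w'$ with $w\sim_a w'$. An action model $\langle T,\sim^{\mathbf{A}},\mathsf{pre}\rangle$ is a partial epistemic frame $\langle T,\sim^{\mathbf{A}}\rangle$ (elements called actions) together with a map $\mathsf{pre}$ assigning an epistemic formula to each action; $\mathrm{Alive}(t)=\{a\mid t\sim^{\mathbf{A}}_a t\}$. Partial product update: for $t\in T$ and $X\in W^{\mathcal{M}}$ let $\langle X\rangle_t=\{Y\in W^{\mathcal{M}}\mid X\sim^{\mathcal{M}}_{\mathrm{Alive}(t)}Y \text{ and } \mathcal{M},Y\models\mathsf{pre}(t)\}$. Then $\mathcal{M}[\![\mathbf{A}]\!]=\langle W,\sim,L\rangle$ where $W=\{(\langle X\rangle_t,t)\mid X\in W^{\mathcal{M}},t\in T,\mathrm{Alive}(t)\subseteq\mathrm{Alive}(X),\mathcal{M},X\models\mathsf{pre}(t)\}$, $(\langle X\rangle_t,t)\sim_a(\langle Y\rangle_s,s)$ iff $X\sim^{\mathcal{M}}_aY$ and $t\sim^{\mathbf{A}}_a s$, and $L((\langle X\rangle_t,t))=\bigcap_{X'\in\langle X\rangle_t}L^{\mathcal{M}}(X')$. *)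

theory Defs
  imports Main
begin

text \<open>Agents are the natural numbers below n (Ag = {0..<n}); atomic propositions
are the elements of the type 'p.\<close>

datatype 'p fm = Atom 'p | Neg "'p fm" | Conj "'p fm" "'p fm" | Disj "'p fm" "'p fm"
  | Kn nat "'p fm"

fun wf_fm :: "nat \<Rightarrow> 'p fm \<Rightarrow> bool" where
  "wf_fm n (Atom p) = True"
| "wf_fm n (Neg f) = wf_fm n f"
| "wf_fm n (Conj f g) = (wf_fm n f \<and> wf_fm n g)"
| "wf_fm n (Disj f g) = (wf_fm n f \<and> wf_fm n g)"
| "wf_fm n (Kn a f) = (a < n \<and> wf_fm n f)"

fun sat :: "(nat \<Rightarrow> ('w \<times> 'w) set) \<Rightarrow> ('w \<Rightarrow> 'p set) \<Rightarrow> 'w \<Rightarrow> 'p fm \<Rightarrow> bool" where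
  "sat R L w (Atom p) = (p \<in> L w)"
| "sat R L w (Neg f) = (\<not> sat R L w f)"
| "sat R L w (Conj f g) = (sat R L w f \<and> sat R L w g)"
| "sat R L w (Disj f g) = (sat R L w f \<or> sat R L w g)"
| "sat R L w (Kn a f) = (\<forall>w'. (w, w') \<in> R a \<longrightarrow> sat R L w' f)"

definition pe_frame :: "nat \<Rightarrow> 'w set \<Rightarrow> (nat \<Rightarrow> ('w \<times> 'w) set) \<Rightarrow> bool" where
  "pe_frame n W R \<longleftrightarrow> finite W \<and> W \<noteq> {} \<and>
     (\<forall>a<n. R a \<subseteq> W \<times> W \<and> sym (R a) \<and> trans (R a))"

definition pe_model :: "nat \<Rightarrow> 'w set \<Rightarrow> (nat \<Rightarrow> ('w \<times> 'w) set) \<Rightarrow> ('w \<Rightarrow> 'p set) \<Rightarrow> bool" where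
  "pe_model n W R L \<longleftrightarrow> pe_frame n W R"

definition proper :: "nat \<Rightarrow> 'w set \<Rightarrow> (nat \<Rightarrow> ('w \<times> 'w) set) \<Rightarrow> bool" where
  "proper n W R \<longleftrightarrow> (\<forall>w\<in>W. \<forall>w'\<in>W. w \<noteq> w' \<longrightarrow> (\<exists>a<n. (w, w') \<notin> R a))"

definition action_model :: "nat \<Rightarrow> 't set \<Rightarrow> (nat \<Rightarrow> ('t \<times> 't) set) \<Rightarrow> ('t \<Rightarrow> 'p fm) \<Rightarrow> bool" where
  "action_model n T S pre \<longleftrightarrow> pe_frame n T S \<and> (\<forall>t\<in>T. wf_fm n (pre t))"

definition alive :: "nat \<Rightarrow> (nat \<Rightarrow> ('w \<times> 'w) set) \<Rightarrow> 'w \<Rightarrow> nat set" where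
  "alive n R w = {a. a < n \<and> (w, w) \<in> R a}"

definition simA :: "(nat \<Rightarrow> ('w \<times> 'w) set) \<Rightarrow> nat set \<Rightarrow> 'w \<Rightarrow> 'w \<Rightarrow> bool" where
  "simA R A X Y \<longleftrightarrow> (\<forall>a\<in>A. (X, Y) \<in> R a)"

definition gen :: "nat \<Rightarrow> 'w set \<Rightarrow> (nat \<Rightarrow> ('w \<times> 'w) set) \<Rightarrow> ('w \<Rightarrow> 'p set)
    \<Rightarrow> (nat \<Rightarrow> ('t \<times> 't) set) \<Rightarrow> ('t \<Rightarrow> 'p fm) \<Rightarrow> 'w \<Rightarrow> 't \<Rightarrow> 'w set" where
  "gen n W R L S pre X t = {Y \<in> W. simA R (alive n S t) X Y \<and> sat R L Y (pre t)}"

definition valid_rep :: "nat \<Rightarrow> 'w set \<Rightarrow> (nat \<Rightarrow> ('w \<times> 'w) set) \<Rightarrow> ('w \<Rightarrow> 'p set)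
    \<Rightarrow> 't set \<Rightarrow> (nat \<Rightarrow> ('t \<times> 't) set) \<Rightarrow> ('t \<Rightarrow> 'p fm) \<Rightarrow> 'w \<Rightarrow> 't \<Rightarrow> bool" where
  "valid_rep n W R L T S pre X t \<longleftrightarrow>
     X \<in> W \<and> t \<in> T \<and> alive n S t \<subseteq> alive n R X \<and> sat R L X (pre t)"

definition upd_W :: "nat \<Rightarrow> 'w set \<Rightarrow> (nat \<Rightarrow> ('w \<times> 'w) set) \<Rightarrow> ('w \<Rightarrow> 'p set)
    \<Rightarrow> 't set \<Rightarrow> (nat \<Rightarrow> ('t \<times> 't) set) \<Rightarrow> ('t \<Rightarrow> 'p fm) \<Rightarrow> ('w set \<times> 't) set" where
  "upd_W n W R L T S pre =
     {(gen n W R L S pre X t, t) | X t. valid_rep n W R L T S pre X t}"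

definition upd_R :: "nat \<Rightarrow> 'w set \<Rightarrow> (nat \<Rightarrow> ('w \<times> 'w) set) \<Rightarrow> ('w \<Rightarrow> 'p set)
    \<Rightarrow> 't set \<Rightarrow> (nat \<Rightarrow> ('t \<times> 't) set) \<Rightarrow> ('t \<Rightarrow> 'p fm) \<Rightarrow> nat
    \<Rightarrow> (('w set \<times> 't) \<times> ('w set \<times> 't)) set" where
  "upd_R n W R L T S pre a =
     {((gen n W R L S pre X t, t), (gen n W R L S pre Y s, s)) | X t Y s.
        valid_rep n W R L T S pre X t \<and> valid_rep n W R L T S pre Y s \<and>
        (X, Y) \<in> R a \<and> (t, s) \<in> S a}"

definition upd_L :: "('w \<Rightarrow> 'p set) \<Rightarrow> ('w set \<times> 't) \<Rightarrow> 'p set" where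
  "upd_L L w = (\<Inter>X'\<in>fst w. L X')"

definition upd_well_defined :: "nat \<Rightarrow> 'w set \<Rightarrow> (nat \<Rightarrow> ('w \<times> 'w) set) \<Rightarrow> ('w \<Rightarrow> 'p set)
    \<Rightarrow> 't set \<Rightarrow> (nat \<Rightarrow> ('t \<times> 't) set) \<Rightarrow> ('t \<Rightarrow> 'p fm) \<Rightarrow> bool" where
  "upd_well_defined n W R L T S pre \<longleftrightarrow>
     (\<forall>a<n. \<forall>X X' t Y Y' s.
        valid_rep n W R L T S pre X t \<and> valid_rep n W R L T S pre X' t \<and>
        gen n W R L S pre X t = gen n W R L S pre X' t \<and>
        valid_rep n W R L T S pre Y s \<and> valid_rep n W R L T S pre Y' s \<and>
        gen n W R L S pre Y s = gen n W R L S pre Y' s \<longrightarrow>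
        (((X, Y) \<in> R a \<and> (t, s) \<in> S a) \<longleftrightarrow> ((X', Y') \<in> R a \<and> (t, s) \<in> S a)))"

end

theory Submission
  imports Defs
begin

lemma self_in_gen:
  assumes "valid_rep n W R L T S pre X t"
  shows "X \<in> gen n W R L S pre X t"
  using assms unfolding valid_rep_def gen_def simA_def alive_def by auto

lemma gen_rel:
  assumes "valid_rep n W R L T S pre X t" "gen n W R L S pre X t = gen n W R L S pre X' t"
    "a \<in> alive n S t"
  shows "(X', X) \<in> R a"
proof -
  have "X \<in> gen n W R L S pre X' t" using self_in_gen[OF assms(1)] assms(2) by simp
  thus ?thesis using assms(3) unfolding gen_def simA_def by auto
qed

lemma alive_of_rel:
  assumes "pe_frame n T S" "a < n" "(t, s) \<in> S a"
  shows "a \<in> alive n S t" "a \<in> alive n S s"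
proof -
  have "sym (S a)" "trans (S a)" using assms unfolding pe_frame_def by auto
  hence "(s, t) \<in> S a" using assms(3) by (meson symD)
  hence "(t, t) \<in> S a" "(s, s) \<in> S a" using assms(3) \<open>trans (S a)\<close> by (meson transD)+
  thus "a \<in> alive n S t" "a \<in> alive n S s" using assms(2) unfolding alive_def by auto
qed

lemma transfer_rel:
  assumes W: "pe_frame n W R" and T: "pe_frame n T S" and a: "a < n"
    and v1: "valid_rep n W R L T S pre X t" and v2: "valid_rep n W R L T S pre X' t"
    and g1: "gen n W R L S pre X t = gen n W R L S pre X' t"
    and v3: "valid_rep n W R L T S pre Y s" and v4: "valid_rep n W R L T S pre Y' s"
    and g2: "gen n W R L S pre Y s = gen n W R L S pre Y' s"
    and r: "(X, Y) \<in> R a" and ts: "(t, s) \<in> S a"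
  shows "(X', Y') \<in> R a"
proof -
  have sy: "sym (R a)" and tr: "trans (R a)" using W a unfolding pe_frame_def by auto
  have "(X', X) \<in> R a" using gen_rel[OF v1 g1 alive_of_rel(1)[OF T a ts]] .
  moreover have "(Y, Y') \<in> R a"
    using gen_rel[OF v4 g2[symmetric] alive_of_rel(2)[OF T a ts]] .
  ultimately show ?thesis using r tr by (meson transD)
qed

theorem proposition3p3:
  fixes n :: nat
    and W :: "'w set" and R :: "nat \<Rightarrow> ('w \<times> 'w) set" and L :: "'w \<Rightarrow> 'p set"
    and T :: "'t set" and S :: "nat \<Rightarrow> ('t \<times> 't) set" and pre :: "'t \<Rightarrow> 'p fm"
  assumes "n > 1"
    and "pe_model n W R L" and "proper n W R"
    and "action_model n T S pre" and "proper n T S"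
  shows "upd_well_defined n W R L T S pre
    \<and> (upd_W n W R L T S pre \<noteq> {} \<longrightarrow>
         pe_model n (upd_W n W R L T S pre) (upd_R n W R L T S pre) (upd_L L))
    \<and> proper n (upd_W n W R L T S pre) (upd_R n W R L T S pre)"
proof -
  have W: "pe_frame n W R" using assms(2) unfolding pe_model_def .
  have T: "pe_frame n T S" using assms(4) unfolding action_model_def by simp
  let ?g = "gen n W R L S pre" and ?v = "valid_rep n W R L T S pre"
  have wd: "upd_well_defined n W R L T S pre"
    unfolding upd_well_defined_def
    using transfer_rel[OF W T] by metis
  have fin: "finite (upd_W n W R L T S pre)"
  proof -
    have "upd_W n W R L T S pre \<subseteq> (\<lambda>(X, t). (?g X t, t)) ` (W \<times> T)"
      unfolding upd_W_def valid_rep_def by auto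
    moreover have "finite W" "finite T" using W T unfolding pe_frame_def by auto
    ultimately show ?thesis by (meson finite_SigmaI finite_imageI finite_subset)
  qed
  have sub: "upd_R n W R L T S pre a \<subseteq> upd_W n W R L T S pre \<times> upd_W n W R L T S pre" for a
    unfolding upd_R_def upd_W_def by blast
  have sym: "sym (upd_R n W R L T S pre a)" if a: "a < n" for a
  proof -
    have sy: "sym (R a)" "sym (S a)" using W T a unfolding pe_frame_def by auto
    show ?thesis unfolding sym_def upd_R_def using sy by (auto dest: symD)
  qed
  have trn: "trans (upd_R n W R L T S pre a)" if a: "a < n" for a
  proof (rule transI)
    fix u v w
    assume "(u, v) \<in> upd_R n W R L T S pre a" "(v, w) \<in> upd_R n W R L T S pre a"
    then obtain X t Y s Y' s' Z r where
      u: "u = (?g X t, t)" and v: "v = (?g Y s, s)" and v': "v = (?g Y' s', s')"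
      and w: "w = (?g Z r, r)" and vX: "?v X t" and vY: "?v Y s" and vY': "?v Y' s'"
      and vZ: "?v Z r" and XY: "(X, Y) \<in> R a" and ts: "(t, s) \<in> S a"
      and YZ: "(Y', Z) \<in> R a" and sr: "(s', r) \<in> S a"
      unfolding upd_R_def by blast
    have ss: "s' = s" using v v' by simp
    have gg: "?g Y s = ?g Y' s" using v v' ss by simp
    have trR: "trans (R a)" and trS: "trans (S a)" using W T a unfolding pe_frame_def by auto
    have "(Y, Y') \<in> R a"
      using ss vY' gen_rel[OF _ gg[symmetric] alive_of_rel(2)[OF T a ts]] by simp
    hence "(X, Z) \<in> R a" using XY YZ trR by (meson transD)
    moreover have "(t, r) \<in> S a" using ts sr ss trS by (meson transD)
    ultimately show "(u, w) \<in> upd_R n W R L T S pre a"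
      unfolding upd_R_def u w using vX vZ by blast
  qed
  have pm: "upd_W n W R L T S pre \<noteq> {} \<longrightarrow>
         pe_model n (upd_W n W R L T S pre) (upd_R n W R L T S pre) (upd_L L)"
    unfolding pe_model_def pe_frame_def using fin sub sym trn by blast
  have pr: "proper n (upd_W n W R L T S pre) (upd_R n W R L T S pre)"
    unfolding proper_def
  proof (intro ballI impI)
    fix u w assume uW: "u \<in> upd_W n W R L T S pre" and wW: "w \<in> upd_W n W R L T S pre"
      and ne: "u \<noteq> w"
    obtain X t where u: "u = (?g X t, t)" and vX: "?v X t" using uW unfolding upd_W_def by blast
    obtain Y s where w: "w = (?g Y s, s)" and vY: "?v Y s" using wW unfolding upd_W_def by blast
    show "\<exists>a<n. (u, w) \<notin> upd_R n W R L T S pre a"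
    proof (rule ccontr)
      assume "\<not> ?thesis"
      hence all: "\<forall>a<n. (u, w) \<in> upd_R n W R L T S pre a" by blast
      have rel: "(X, Y) \<in> R a \<and> (t, s) \<in> S a" if a: "a < n" for a
      proof -
        obtain X1 t1 Y1 s1 where e1: "u = (?g X1 t1, t1)" and e2: "w = (?g Y1 s1, s1)"
          and v1: "?v X1 t1" and v2: "?v Y1 s1" and r: "(X1, Y1) \<in> R a"
          and ts: "(t1, s1) \<in> S a"
          using all a unfolding upd_R_def by blast
        have "t1 = t" "s1 = s" using e1 e2 u w by auto
        moreover have "?g X1 t = ?g X t" "?g Y1 s = ?g Y s" using e1 e2 u w by auto
        ultimately show ?thesis
          using transfer_rel[OF W T a _ vX _ _ vY, of X1 Y1] v1 v2 r ts by auto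
      qed
      have "t = s" using assms(5) vX vY rel unfolding proper_def valid_rep_def by blast
      moreover have "X = Y" using assms(3) vX vY rel unfolding proper_def valid_rep_def by blast
      ultimately show False using ne u w by simp
    qed
  qed
  show ?thesis using wd pm pr by blast
qed

end
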